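(* Let $b,c,t$ be positive integers, $n=tb$, and let $\mathbf{H}^{*}_{qc}$ be a $cb\times tb$ binary matrix which is a $c\times t$ array of $b\times b$ circulant matrices over $\mathbb{F}_2$, of rank $r$ over $\mathbb{F}_2$. Let $\mathcal{C}\subseteq\mathbb{F}_2^n$ be the code with parity-check matrix $\mathbf{H}^{*}_{qc}$ and $\Lambda=\mathcal{C}+2\mathbb{Z}^n=\{\mathbf{x}\in\mathbb{Z}^n:\mathbf{x}\bmod 2\in\mathcal{C}\}$. Suppose $l$ with $c\le l\le t$ is the least number of columns of circulants of $\mathbf{H}^{*}_{qc}$ forming a submatrix of rank $r$, and that the last $l$ columns of circulants of $\mathbf{H}^{*}_{qc}$ form such a $cb\times lb$ submatrix $\mathbf{D}^{*}$. Suppose $d_1,\dots,d_l\in\{0,\dots,b\}$, with $\bar d_j=b-d_j$, are such that the columns of $\mathbf{D}^{*}$ consisting, for each $j=1,\dots,l$, of the last $\bar d_j$ columns of the $j$-th column block (of width $b$) of $\mathbf{D}^{*}$ are linearly independent over $\mathbb{F}_2$ and number exactly $r$ (so $\sum_j\bar d_j=r$ and $\sum_j d_j=lb-r$). For each $i$ with $d_i\ge1$, let $\mathbf{w}_i=(\mathbf{w}_i^{(1)},\dots,\mathbf{w}_i^{(l)})\in\mathbb{F}_2^{lb}$, $\mathbf{w}_i^{(j)}\in\mathbb{F}_2^b$, be the vector with $\mathbf{D}^{*}\mathbf{w}_i^t=\mathbf{0}$ over $\mathbb{F}_2$ such that the first $d_j$ entries of $\mathbf{w}_i^{(j)}$ are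 $(1,0,\dots,0)$ if $j=i$ and all $0$ if $j\ne i$. Let $\sigma$ denote the cyclic right shift by one position on $\mathbb{F}_2^b$. Let $\mathbf{Q}$ be the $(lb-r)\times tb$ binary matrix whose rows are, for each $i=1,\dots,l$ and $s=0,\dots,d_i-1$, the vectors $(\mathbf{0}_{(t-l)b},\sigma^s(\mathbf{w}_i^{(1)}),\dots,\sigma^s(\mathbf{w}_i^{(l)}))$. Let $\mathbf{G}$ be a $(t-l)b\times tb$ binary matrix of the form $[\mathbf{I}_{(t-l)b}\ |\ \mathbf{G}']$ with $\mathbf{G}'$ a $(t-l)\times l$ array of $b\times b$ circulants, and assume that $\mathbf{G}^{*}_{qc}=\begin{bmatrix}\mathbf{G}\\ \mathbf{Q}\end{bmatrix}$ is a generator matrix of $\mathcal{C}$ (its $tb-r$ rows form a basis of $\mathcal{C}$). Let $\mathbf{R}$ be the $r\times tb$ integer matrix $[\mathbf{0}_{r\times(t-l)b}\ |\ \mathbf{B}]$ where $\mathbf{B}$ is block diagonal with $l$ diagonal blocks, the $j$-th being the $\bar d_j\times b$ matrix $[\mathbf{0}_{\bar d_j\times d_j}\ \ 2\mathbf{I}_{\bar d_j}]$. Then the $n\times n$ integer matrix $$\mathbf{G}_{\Lambda}=\begin{bmatrix}\mathbf{G}^{*}_{qc}\\ \mathbf{R}\end{bmatrix}$$ (entries of $\mathbf{G}^{*}_{qc}$ regarded as integers $0,1$) is a generator matrix of $\Lambda$, i.e., its rows form a $\mathbb{Z}$-basis of $\Lambda$.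
   Context: Codewords of a binary code are embedded in $\mathbb{Z}^n$ with entries $0,1$. $\Lambda=\mathcal{C}+2\mathbb{Z}^n$ is the Construction A lattice of $\mathcal{C}$ (a QC-LDPC lattice when $\mathcal{C}$ is a quasi-cyclic LDPC code). A generator matrix of a full-rank lattice is a square matrix whose rows form a $\mathbb{Z}$-basis of the lattice. *)

theory Defs
  imports Main
begin

text \<open>Vectors in Z^n / F_2^n are functions nat => int, zero at indices >= n;
binary vectors take values in {0,1}; F_2 arithmetic is int arithmetic mod 2.
Matrices are functions nat => nat => int with explicitly given dimensions.
All indices (rows, columns, blocks, i, j, s) are 0-based.\<close>

definition zvec :: "nat \<Rightarrow> (nat \<Rightarrow> int) set" where
  "zvec n = {x. \<forall>i\<ge>n. x i = 0}"

definition bvec :: "nat \<Rightarrow> (nat \<Rightarrow> int) set" where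
  "bvec n = {x. x \<in> zvec n \<and> (\<forall>i<n. x i \<in> {0,1})}"

definition f2_indep_cols :: "(nat \<Rightarrow> nat \<Rightarrow> int) \<Rightarrow> nat \<Rightarrow> nat set \<Rightarrow> bool" where
  "f2_indep_cols H m K \<longleftrightarrow> finite K \<and>
     (\<forall>T\<subseteq>K. T \<noteq> {} \<longrightarrow> (\<exists>i<m. (\<Sum>j\<in>T. H i j) mod 2 \<noteq> 0))"

definition f2_rank_cols :: "(nat \<Rightarrow> nat \<Rightarrow> int) \<Rightarrow> nat \<Rightarrow> nat set \<Rightarrow> nat" where
  "f2_rank_cols H m J = Max (card ` {K. K \<subseteq> J \<and> f2_indep_cols H m K})"

definition block_cols :: "nat \<Rightarrow> nat set \<Rightarrow> nat set" where
  "block_cols b S = {q * b + k | q k. q \<in> S \<and> k < b}"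

definition block_circulant :: "(nat \<Rightarrow> nat \<Rightarrow> int) \<Rightarrow> nat \<Rightarrow> nat \<Rightarrow> nat \<Rightarrow> nat \<Rightarrow> nat \<Rightarrow> bool" where
  "block_circulant M b r0 c0 p q \<longleftrightarrow>
     (\<forall>u<p. \<forall>v<q. \<forall>i<b. \<forall>j<b.
        M (r0 + u * b + i) (c0 + v * b + j) =
        M (r0 + u * b + (i + 1) mod b) (c0 + v * b + (j + 1) mod b))"

definition pc_code :: "(nat \<Rightarrow> nat \<Rightarrow> int) \<Rightarrow> nat \<Rightarrow> nat \<Rightarrow> (nat \<Rightarrow> int) set" where
  "pc_code H m n = {x \<in> bvec n. \<forall>i<m. (\<Sum>j<n. H i j * x j) mod 2 = 0}"

definition constrA :: "(nat \<Rightarrow> int) set \<Rightarrow> nat \<Rightarrow> (nat \<Rightarrow> int) set" where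
  "constrA C n = {x \<in> zvec n. (\<lambda>i. x i mod 2) \<in> C}"

definition f2_basis :: "(nat \<Rightarrow> int) list \<Rightarrow> (nat \<Rightarrow> int) set \<Rightarrow> bool" where
  "f2_basis vs C \<longleftrightarrow>
     (\<forall>x. x \<in> C \<longleftrightarrow> (\<exists>T\<subseteq>{..<length vs}. x = (\<lambda>j. (\<Sum>k\<in>T. (vs ! k) j) mod 2))) \<and>
     (\<forall>T\<subseteq>{..<length vs}. T \<noteq> {} \<longrightarrow> (\<lambda>j. (\<Sum>k\<in>T. (vs ! k) j) mod 2) \<noteq> (\<lambda>_. 0))"

definition z_basis :: "(nat \<Rightarrow> int) list \<Rightarrow> (nat \<Rightarrow> int) set \<Rightarrow> bool" where
  "z_basis vs L \<longleftrightarrow>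
     (\<forall>x. x \<in> L \<longleftrightarrow> (\<exists>a::nat \<Rightarrow> int. x = (\<lambda>j. \<Sum>k<length vs. a k * (vs ! k) j))) \<and>
     (\<forall>a::nat \<Rightarrow> int. (\<lambda>j. \<Sum>k<length vs. a k * (vs ! k) j) = (\<lambda>_. 0) \<longrightarrow> (\<forall>k<length vs. a k = 0))"

definition mat_row :: "(nat \<Rightarrow> nat \<Rightarrow> int) \<Rightarrow> nat \<Rightarrow> nat \<Rightarrow> nat \<Rightarrow> int" where
  "mat_row M n i = (\<lambda>j. if j < n then M i j else 0)"

definition G_rows :: "(nat \<Rightarrow> nat \<Rightarrow> int) \<Rightarrow> nat \<Rightarrow> nat \<Rightarrow> nat \<Rightarrow> (nat \<Rightarrow> int) list" where
  "G_rows G t b l = map (mat_row G (t * b)) [0..<(t - l) * b]"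

text \<open>Row (i,s) of Q: (0_{(t-l)b}, sigma^s(w_i^(1)), ..., sigma^s(w_i^(l))), where sigma is the
  cyclic right shift, so sigma^s(v)_k = v_{(k - s) mod b}; w i is indexed by j*b + k.\<close>
definition Q_row :: "(nat \<Rightarrow> nat \<Rightarrow> int) \<Rightarrow> nat \<Rightarrow> nat \<Rightarrow> nat \<Rightarrow> nat \<Rightarrow> nat \<Rightarrow> nat \<Rightarrow> int" where
  "Q_row w t b l i s = (\<lambda>col.
     if (t - l) * b \<le> col \<and> col < t * b then
       (let p = col - (t - l) * b; j = p div b; k = p mod b
        in w i (j * b + (k + b - s mod b) mod b))
     else 0)"

definition Q_rows :: "(nat \<Rightarrow> nat \<Rightarrow> int) \<Rightarrow> nat \<Rightarrow> nat \<Rightarrow> nat \<Rightarrow> (nat \<Rightarrow> nat) \<Rightarrow> (nat \<Rightarrow> int) list" where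
  "Q_rows w t b l d = concat (map (\<lambda>i. map (\<lambda>s. Q_row w t b l i s) [0..<d i]) [0..<l])"

text \<open>Row (j,q) of R = [0 | B], B block diagonal with j-th block [0_{dbar_j x d_j}  2 I_{dbar_j}].\<close>
definition R_row :: "nat \<Rightarrow> nat \<Rightarrow> nat \<Rightarrow> (nat \<Rightarrow> nat) \<Rightarrow> nat \<Rightarrow> nat \<Rightarrow> nat \<Rightarrow> int" where
  "R_row t b l d j q = (\<lambda>col.
     if col = (t - l) * b + j * b + d j + q then 2 else 0)"

definition R_rows :: "nat \<Rightarrow> nat \<Rightarrow> nat \<Rightarrow> (nat \<Rightarrow> nat) \<Rightarrow> (nat \<Rightarrow> int) list" where
  "R_rows t b l d = concat (map (\<lambda>j. map (\<lambda>q. R_row t b l d j q) [0..<b - d j]) [0..<l])"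

end

theory Submission imports Defs begin

definition spanZ :: "(nat \<Rightarrow> int) list \<Rightarrow> (nat \<Rightarrow> int) set" where
  "spanZ vs = {x. \<exists>a::nat\<Rightarrow>int. x = (\<lambda>j. \<Sum>k<length vs. a k * (vs ! k) j)}"

definition E2 :: "nat \<Rightarrow> nat \<Rightarrow> int" where "E2 q = (\<lambda>j. if j = q then 2 else 0)"

lemma sum_split_add: "(\<Sum>k<(m0::nat) + (mR::nat). f k) = (\<Sum>k<m0. f k) + (\<Sum>k<mR. f (m0 + k))"
  by (induction mR) (auto simp: add.assoc)

lemma spanZ_0: "(\<lambda>_. 0) \<in> spanZ vs"
  unfolding spanZ_def by (rule CollectI, rule exI[of _ "\<lambda>_. 0"]) simp

lemma spanZ_add: "x \<in> spanZ vs \<Longrightarrow> y \<in> spanZ vs \<Longrightarrow> (\<lambda>j. x j + y j) \<in> spanZ vs"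
  unfolding spanZ_def
proof (clarify)
  fix a a' show "\<exists>a''. (\<lambda>j. (\<Sum>k<length vs. a k * (vs ! k) j) + (\<Sum>k<length vs. a' k * (vs ! k) j))
     = (\<lambda>j. \<Sum>k<length vs. a'' k * (vs ! k) j)"
    by (rule exI[of _ "\<lambda>k. a k + a' k"]) (simp add: distrib_right sum.distrib)
qed

lemma spanZ_smult: "x \<in> spanZ vs \<Longrightarrow> (\<lambda>j. c * x j) \<in> spanZ vs"
  unfolding spanZ_def
proof (clarify)
  fix a show "\<exists>a''. (\<lambda>j. c * (\<Sum>k<length vs. a k * (vs ! k) j))
     = (\<lambda>j. \<Sum>k<length vs. a'' k * (vs ! k) j)"
    by (rule exI[of _ "\<lambda>k. c * a k"]) (simp add: sum_distrib_left mult.assoc)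
qed

lemma spanZ_mem: "v \<in> set vs \<Longrightarrow> v \<in> spanZ vs"
proof -
  assume "v \<in> set vs"
  then obtain i where i: "i < length vs" "v = vs ! i" by (auto simp: in_set_conv_nth)
  have "v = (\<lambda>j. \<Sum>k<length vs. (if k = i then 1 else 0) * (vs ! k) j)"
  proof
    fix j
    have "(\<Sum>k<length vs. (if k = i then 1 else 0) * (vs ! k) j) = (\<Sum>k<length vs. if k = i then (vs ! k) j else 0)"
      by (rule sum.cong) auto
    then show "v j = (\<Sum>k<length vs. (if k = i then 1 else 0) * (vs ! k) j)" using i by simp
  qed
  then show ?thesis unfolding spanZ_def by (intro CollectI exI[of _ "\<lambda>k. if k = i then 1 else 0"])
qed

lemma spanZ_sum: "finite K \<Longrightarrow> (\<forall>q\<in>K. f q \<in> spanZ vs) \<Longrightarrow> (\<lambda>j. \<Sum>q\<in>K. c q * f q j) \<in> spanZ vs"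
proof (induction K rule: finite_induct)
  case empty then show ?case using spanZ_0 by simp
next
  case (insert x F)
  have "(\<lambda>j. c x * f x j + (\<Sum>q\<in>F. c q * f q j)) \<in> spanZ vs"
    using insert by (intro spanZ_add spanZ_smult) auto
  then show ?case using insert by simp
qed

lemma spanZ_pivot:
  assumes v: "v \<in> spanZ vs" and z: "\<forall>j\<ge>n. v j = 0" and vq: "v q = 1"
    and oth: "\<forall>q'<n. q' \<noteq> q \<and> v q' \<noteq> 0 \<longrightarrow> E2 q' \<in> spanZ vs"
  shows "E2 q \<in> spanZ vs"
proof -
  define K where "K = {q'. q' < n \<and> q' \<noteq> q \<and> v q' \<noteq> 0}"
  have fK: "finite K" unfolding K_def by auto
  have r: "(\<lambda>j. \<Sum>q'\<in>K. v q' * E2 q' j) \<in> spanZ vs"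
    using spanZ_sum[OF fK] oth unfolding K_def by auto
  have r2: "(\<lambda>j. (-1) * (\<Sum>q'\<in>K. v q' * E2 q' j)) \<in> spanZ vs" by (rule spanZ_smult[OF r])
  have s: "(\<lambda>j. 2 * v j + (-1) * (\<Sum>q'\<in>K. v q' * E2 q' j)) \<in> spanZ vs"
    by (rule spanZ_add[OF spanZ_smult[OF v] r2])
  have eq: "(\<lambda>j. 2 * v j + (-1) * (\<Sum>q'\<in>K. v q' * E2 q' j)) = E2 q"
  proof
    fix j
    have "(\<Sum>q'\<in>K. v q' * E2 q' j) = (\<Sum>q'\<in>K. if q' = j then 2 * v j else 0)"
      by (rule sum.cong) (auto simp: E2_def)
    also have "\<dots> = (if j \<in> K then 2 * v j else 0)" using fK by (simp add: sum.delta')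
    finally show "2 * v j + (-1) * (\<Sum>q'\<in>K. v q' * E2 q' j) = E2 q j"
      using z vq unfolding K_def E2_def by (cases "j < n") auto
  qed
  show ?thesis using s eq by simp
qed

lemma spanZ_even:
  assumes all: "\<forall>q<n. E2 q \<in> spanZ vs" and ev: "\<forall>j. even (y j)" and z: "\<forall>j\<ge>n. y j = 0"
  shows "y \<in> spanZ vs"
proof -
  have s: "(\<lambda>j. \<Sum>q\<in>{..<n}. (y q div 2) * E2 q j) \<in> spanZ vs"
    using spanZ_sum[of "{..<n}"] all by auto
  have "(\<lambda>j. \<Sum>q\<in>{..<n}. (y q div 2) * E2 q j) = y"
  proof
    fix j
    have "(\<Sum>q\<in>{..<n}. (y q div 2) * E2 q j) = (\<Sum>q\<in>{..<n}. if q = j then 2 * (y j div 2) else 0)"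
      by (rule sum.cong) (auto simp: E2_def)
    also have "\<dots> = y j" using z ev[rule_format, of j] by (simp add: sum.delta')
    finally show "(\<Sum>q\<in>{..<n}. (y q div 2) * E2 q j) = y j" .
  qed
  then show ?thesis using s by simp
qed

lemma mod2_sum_cong:
  assumes "\<forall>k\<in>A. f k mod 2 = g k mod 2"
  shows "(sum f A :: int) mod 2 = sum g A mod 2"
proof -
  have "sum f A mod 2 = (\<Sum>k\<in>A. f k mod 2) mod 2" by (simp add: mod_sum_eq)
  also have "\<dots> = (\<Sum>k\<in>A. g k mod 2) mod 2" using assms by (simp cong: sum.cong)
  also have "\<dots> = sum g A mod 2" by (simp add: mod_sum_eq)
  finally show ?thesis .
qed

lemma par:
  "(\<Sum>k<length xs. a k * (xs ! k) j) mod 2 = (\<Sum>k\<in>{k. k < length xs \<and> odd (a k)}. (xs ! k) j) mod (2::int)"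
proof -
  have "(\<Sum>k<length xs. a k * (xs ! k) j) mod 2 = (\<Sum>k<length xs. if odd (a k) then (xs ! k) j else 0) mod 2"
  proof (rule mod2_sum_cong, intro ballI)
    fix k
    show "a k * (xs ! k) j mod 2 = (if odd (a k) then (xs ! k) j else 0) mod 2"
    proof (cases "odd (a k)")
      case True
      then have "a k mod 2 = 1" by (simp add: odd_iff_mod_2_eq_one)
      then have "a k * (xs ! k) j mod 2 = (1 * (xs ! k) j) mod 2" by (metis mod_mult_left_eq)
      then show ?thesis using True by simp
    next
      case False then show ?thesis by simp
    qed
  qed
  also have "(\<Sum>k<length xs. if odd (a k) then (xs ! k) j else 0) = (\<Sum>k\<in>{..<length xs} \<inter> {k. odd (a k)}. (xs ! k) j)"
    by (simp add: sum.inter_restrict)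
  also have "{..<length xs} \<inter> {k. odd (a k)} = {k. k < length xs \<and> odd (a k)}" by auto
  finally show ?thesis .
qed

lemma set_G: "set (G_rows G t b l) = {mat_row G (t*b) a | a. a < (t-l)*b}"
  by (auto simp: G_rows_def)

lemma set_Q: "set (Q_rows w t b l d) = {Q_row w t b l i s | i s. i < l \<and> s < d i}"
  by (auto simp: Q_rows_def; blast)

definition Rpos :: "nat \<Rightarrow> nat \<Rightarrow> nat \<Rightarrow> (nat \<Rightarrow> nat) \<Rightarrow> nat list" where
  "Rpos t b l d = concat (map (\<lambda>j. map (\<lambda>q. (t - l) * b + j * b + d j + q) [0..<b - d j]) [0..<l])"

lemma R_rows_map: "R_rows t b l d = map E2 (Rpos t b l d)"
  by (simp add: R_rows_def Rpos_def map_concat R_row_def E2_def comp_def del: map_add_upt)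

lemma set_Rpos:
  assumes "\<forall>j<l. d j \<le> b"
  shows "set (Rpos t b l d) = {(t - l) * b + j * b + k | j k. j < l \<and> d j \<le> k \<and> k < b}"
proof (intro equalityI subsetI)
  fix x assume "x \<in> set (Rpos t b l d)"
  then obtain j q where "j < l" "q < b - d j" "x = (t - l) * b + j * b + d j + q"
    unfolding Rpos_def by (auto simp only: set_concat set_map set_upt image_iff UN_iff atLeastLessThan_iff Bex_def)
  then show "x \<in> {(t - l) * b + j * b + k | j k. j < l \<and> d j \<le> k \<and> k < b}"
    by (intro CollectI exI[of _ j] exI[of _ "d j + q"]) auto
next
  fix x assume "x \<in> {(t - l) * b + j * b + k | j k. j < l \<and> d j \<le> k \<and> k < b}"
  then obtain j k where jk: "j < l" "d j \<le> k" "k < b" "x = (t - l) * b + j * b + k" by auto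
  then have "x = (t - l) * b + j * b + d j + (k - d j)" "k - d j < b - d j" by auto
  then show "x \<in> set (Rpos t b l d)" using jk unfolding Rpos_def
    by (auto intro!: bexI[of _ j] image_eqI[of _ _ "k - d j"])
qed

lemma distinct_Rpos_aux:
  assumes "\<forall>j<L. d j \<le> b"
  shows "distinct (concat (map (\<lambda>j. map (\<lambda>q. B + j * b + d j + q) [0..<b - d j]) [0..<L]))
     \<and> (\<forall>x\<in>set (concat (map (\<lambda>j. map (\<lambda>q. B + j * b + d j + q) [0..<b - d j]) [0..<L])). x < B + L * b)"
  using assms
proof (induction L)
  case 0 then show ?case by simp
next
  case (Suc L)
  have IH: "distinct (concat (map (\<lambda>j. map (\<lambda>q. B + j * b + d j + q) [0..<b - d j]) [0..<L]))
     \<and> (\<forall>x\<in>set (concat (map (\<lambda>j. map (\<lambda>q. B + j * b + d j + q) [0..<b - d j]) [0..<L])). x < B + L * b)"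
    using Suc by auto
  have dL: "d L \<le> b" using Suc by auto
  have bound: "\<forall>x\<in>set (concat (map (\<lambda>j. map (\<lambda>q. B + j * b + d j + q) [0..<b - d j]) [0..<Suc L])). x < B + Suc L * b"
  proof
    fix x assume "x \<in> set (concat (map (\<lambda>j. map (\<lambda>q. B + j * b + d j + q) [0..<b - d j]) [0..<Suc L]))"
    then obtain j q where "j < Suc L" "q < b - d j" "x = B + j * b + d j + q"
      by (auto simp only: set_concat set_map set_upt image_iff UN_iff atLeastLessThan_iff Bex_def)
    moreover have "j * b + b \<le> Suc L * b" using \<open>j < Suc L\<close>
      by (metis Suc_leI mult_Suc mult_le_mono1 add.commute)
    ultimately show "x < B + Suc L * b" by linarith
  qed
  have "distinct (concat (map (\<lambda>j. map (\<lambda>q. B + j * b + d j + q) [0..<b - d j]) [0..<L])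
        @ map (\<lambda>q. B + L * b + d L + q) [0..<b - d L])"
  proof -
    have "\<forall>y\<in>set (map (\<lambda>q. B + L * b + d L + q) [0..<b - d L]). B + L * b \<le> y" by auto
    moreover have "distinct (map (\<lambda>q. B + L * b + d L + q) [0..<b - d L])"
      by (simp add: distinct_map inj_on_def)
    moreover have "set (concat (map (\<lambda>j. map (\<lambda>q. B + j * b + d j + q) [0..<b - d j]) [0..<L]))
        \<inter> set (map (\<lambda>q. B + L * b + d L + q) [0..<b - d L]) = {}"
    proof (rule disjoint_iff[THEN iffD2], intro allI impI)
      fix x assume "x \<in> set (concat (map (\<lambda>j. map (\<lambda>q. B + j * b + d j + q) [0..<b - d j]) [0..<L]))"
      then have "x < B + L * b" using IH by blast
      then show "x \<notin> set (map (\<lambda>q. B + L * b + d L + q) [0..<b - d L])" by auto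
    qed
    ultimately show ?thesis using IH by (simp only: distinct_append)
  qed
  then show ?case using bound by (simp del: map_add_upt)
qed

lemma distinct_Rpos: "\<forall>j<l. d j \<le> b \<Longrightarrow> distinct (Rpos t b l d)"
  unfolding Rpos_def using distinct_Rpos_aux by blast

lemma length_sum_list: "sum_list (map f [0..<l]) = (\<Sum>i<l. f i)"
  by (induction l) auto

lemma len_Q: "length (Q_rows w t b l d) = (\<Sum>i<l. d i)"
  by (simp add: Q_rows_def length_concat comp_def length_sum_list)

lemma len_R: "length (R_rows t b l d) = (\<Sum>i<l. b - d i)"
  by (simp add: R_rows_def length_concat comp_def length_sum_list)

lemma len_G: "length (G_rows G t b l) = (t - l) * b"
  by (simp add: G_rows_def)

theorem theorem1:
  fixes b c t n r l :: nat
    and H G w :: "nat \<Rightarrow> nat \<Rightarrow> int"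
    and d :: "nat \<Rightarrow> nat"
  assumes pos: "0 < b" "0 < c" "0 < t"
    and n_def: "n = t * b"
    and H_bin: "\<forall>i<c * b. \<forall>j<t * b. H i j \<in> {0, 1}"
    and H_circ: "block_circulant H b 0 0 c t"
    and H_rank: "r = f2_rank_cols H (c * b) {..<t * b}"
    and l_range: "c \<le> l" "l \<le> t"
    and l_least: "\<forall>S\<subseteq>{..<t}. card S < l \<longrightarrow> f2_rank_cols H (c * b) (block_cols b S) < r"
    and D_rank: "f2_rank_cols H (c * b) (block_cols b {t - l..<t}) = r"
    and d_le: "\<forall>j<l. d j \<le> b"
    and P_indep: "f2_indep_cols H (c * b)
                    {(t - l) * b + j * b + k | j k. j < l \<and> d j \<le> k \<and> k < b}"
    and P_card: "card {(t - l) * b + j * b + k | j k. j < l \<and> d j \<le> k \<and> k < b} = r"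
    and w_bin: "\<forall>i<l. 1 \<le> d i \<longrightarrow> w i \<in> bvec (l * b)"
    and w_ker: "\<forall>i<l. 1 \<le> d i \<longrightarrow>
                  (\<forall>u<c * b. (\<Sum>p<l * b. H u ((t - l) * b + p) * w i p) mod 2 = 0)"
    and w_init: "\<forall>i<l. 1 \<le> d i \<longrightarrow> (\<forall>j<l. \<forall>k<d j.
                  w i (j * b + k) = (if j = i \<and> k = 0 then 1 else 0))"
    and G_id: "\<forall>i<(t - l) * b. \<forall>j<(t - l) * b. G i j = (if i = j then 1 else 0)"
    and G_bin: "\<forall>i<(t - l) * b. \<forall>j<t * b. G i j \<in> {0, 1}"
    and G_circ: "block_circulant G b 0 ((t - l) * b) (t - l) l"
    and Gqc_basis: "f2_basis (G_rows G t b l @ Q_rows w t b l d) (pc_code H (c * b) n)"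
  shows "length (G_rows G t b l @ Q_rows w t b l d @ R_rows t b l d) = n \<and>
         z_basis (G_rows G t b l @ Q_rows w t b l d @ R_rows t b l d)
                 (constrA (pc_code H (c * b) n) n)"
proof -
  define base where "base = (t - l) * b"
  define GR where "GR = G_rows G t b l"
  define QR where "QR = Q_rows w t b l d"
  define RR where "RR = R_rows t b l d"
  define vs0 where "vs0 = GR @ QR"
  define vs where "vs = GR @ QR @ RR"
  define C where "C = pc_code H (c * b) n"
  define P where "P = {(t - l) * b + j * b + k | j k. j < l \<and> d j \<le> k \<and> k < b}"
  define m0 where "m0 = length vs0"
  define RP where "RP = Rpos t b l d"
  have vs_eq: "vs = vs0 @ RR" unfolding vs_def vs0_def by simp
  have nsplit: "n = base + l * b" using l_range(2) unfolding n_def base_def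
    by (simp flip: distrib_right)
  have lenR: "length RR = (\<Sum>i<l. b - d i)" unfolding RR_def by (rule len_R)
  have len: "length vs = n"
  proof -
    have "(\<Sum>i<l. d i) + (\<Sum>i<l. b - d i) = (\<Sum>i<l. d i + (b - d i))" by (simp add: sum.distrib)
    also have "\<dots> = (\<Sum>i<l. b)" using d_le by (intro sum.cong) auto
    finally have "(\<Sum>i<l. d i) + (\<Sum>i<l. b - d i) = l * b" by simp
    then show ?thesis unfolding vs_def GR_def QR_def RR_def
      using len_G len_Q len_R nsplit base_def by simp
  qed
  have RRmap: "RR = map E2 RP" unfolding RR_def RP_def by (rule R_rows_map)
  have setRP: "set RP = P" unfolding RP_def P_def using d_le by (rule set_Rpos)
  have distRP: "distinct RP" unfolding RP_def using d_le by (rule distinct_Rpos)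
  have P_lt: "\<forall>p\<in>P. base \<le> p \<and> p < n"
  proof
    fix p assume "p \<in> P"
    then obtain j k where jk: "j < l" "k < b" "p = base + j * b + k" unfolding P_def base_def by auto
    have "j * b + b \<le> l * b" using jk(1)
      by (metis Suc_leI mult_Suc mult_le_mono1 add.commute)
    then show "base \<le> p \<and> p < n" using jk nsplit by linarith
  qed
  have setGR: "set GR = {mat_row G n a | a. a < base}" unfolding GR_def n_def base_def by (rule set_G)
  have setQR: "set QR = {Q_row w t b l i s | i s. i < l \<and> s < d i}" unfolding QR_def by (rule set_Q)
  have rowz: "\<forall>v\<in>set vs. \<forall>j\<ge>n. v j = 0"
  proof (intro ballI allI impI)
    fix v j assume v: "v \<in> set vs" and j: "n \<le> j"
    consider "v \<in> set GR" | "v \<in> set QR" | "v \<in> set RR" using v unfolding vs_def by auto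
    then show "v j = 0"
    proof cases
      case 1 then show ?thesis using j setGR by (auto simp: mat_row_def)
    next
      case 2 then show ?thesis using j setQR n_def by (auto simp: Q_row_def)
    next
      case 3 then obtain p where "p \<in> P" "v = E2 p" using RRmap setRP by auto
      then show ?thesis using P_lt j by (auto simp: E2_def)
    qed
  qed
  have RReven: "\<forall>v\<in>set RR. \<forall>j. even (v j)" using RRmap by (auto simp: E2_def)
  have nth0: "\<forall>k<m0. vs ! k = vs0 ! k" unfolding vs_eq m0_def by (simp add: nth_append)
  have nthR: "\<forall>k<length RR. vs ! (m0 + k) = RR ! k" unfolding vs_eq m0_def by (simp add: nth_append)
  have lenvs: "length vs = m0 + length RR" unfolding vs_eq m0_def by simp
  have fb1: "\<forall>x. x \<in> C \<longleftrightarrow> (\<exists>T\<subseteq>{..<m0}. x = (\<lambda>j. (\<Sum>k\<in>T. (vs0 ! k) j) mod 2))"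
    using Gqc_basis unfolding f2_basis_def C_def m0_def vs0_def GR_def QR_def by blast
  have fb2: "\<forall>T\<subseteq>{..<m0}. T \<noteq> {} \<longrightarrow> (\<lambda>j. (\<Sum>k\<in>T. (vs0 ! k) j) mod 2) \<noteq> (\<lambda>_. 0)"
    using Gqc_basis unfolding f2_basis_def C_def m0_def vs0_def GR_def QR_def by blast
  have parvs: "(\<Sum>k<length vs. a k * (vs ! k) j) mod 2 = (\<Sum>k\<in>{k. k < m0 \<and> odd (a k)}. (vs0 ! k) j) mod 2" for a j
  proof -
    have "(\<Sum>k<length vs. a k * (vs ! k) j) = (\<Sum>k<m0. a k * (vs0 ! k) j) + (\<Sum>k<length RR. a (m0 + k) * (RR ! k) j)"
      unfolding lenvs sum_split_add using nth0 nthR by simp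
    moreover have "even (\<Sum>k<length RR. a (m0 + k) * (RR ! k) j)"
      using RReven by (intro dvd_sum) (simp add: nth_mem)
    ultimately have "(\<Sum>k<length vs. a k * (vs ! k) j) mod 2 = (\<Sum>k<m0. a k * (vs0 ! k) j) mod 2"
      by (auto elim!: evenE)
    then show ?thesis using par[of a vs0 j] unfolding m0_def by simp
  qed
  have comb_z: "(\<lambda>j. \<Sum>k<length vs. a k * (vs ! k) j) \<in> zvec n" for a
    using rowz unfolding zvec_def by (auto simp: nth_mem intro!: sum.neutral)
  have Qeval: "Q_row w t b l i s col = (if base \<le> col \<and> col < n then
       w i (((col - base) div b) * b + ((col - base) mod b + b - s mod b) mod b) else 0)" for i s col
    by (simp add: Q_row_def Let_def base_def n_def)
  have Pmem: "\<And>j k. j < l \<Longrightarrow> d j \<le> k \<Longrightarrow> k < b \<Longrightarrow> base + j * b + k \<in> P"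
    unfolding P_def base_def by blast
  define rk where "rk q = (if q \<in> P then 0 else if base \<le> q then Suc ((q - base) mod b) else Suc b)" for q
  have allE: "\<forall>q<n. E2 q \<in> spanZ vs"
  proof -
    have "\<forall>q. rk q = N \<longrightarrow> q < n \<longrightarrow> E2 q \<in> spanZ vs" for N
    proof (induction N rule: less_induct)
      case (less N)
      show ?case
      proof (intro allI impI)
        fix q assume rq: "rk q = N" and qn: "q < n"
        have IH: "\<forall>q'<n. rk q' < rk q \<longrightarrow> E2 q' \<in> spanZ vs" using less rq by blast
        show "E2 q \<in> spanZ vs"
        proof (cases "q \<in> P")
          case True
          then have "E2 q \<in> set vs" using RRmap setRP unfolding vs_eq by auto
          then show ?thesis by (rule spanZ_mem)
        next
          case nP: False
          show ?thesis
          proof (cases "base \<le> q")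
            case True
            define j where "j = (q - base) div b"
            define k where "k = (q - base) mod b"
            have qjk: "q = base + j * b + k" unfolding j_def k_def using True by simp
            have jl: "j < l" unfolding j_def using qn nsplit True pos(1)
              by (simp add: less_mult_imp_div_less)
            have kb: "k < b" unfolding k_def using pos(1) by simp
            have kd: "k < d j"
            proof (rule ccontr)
              assume "\<not> k < d j"
              then have "q \<in> P" using qjk jl kb Pmem by simp
              then show False using nP by simp
            qed
            define v where "v = Q_row w t b l j k"
            have vS: "v \<in> spanZ vs" unfolding v_def
              by (rule spanZ_mem) (use setQR jl kd in \<open>auto simp: vs_def\<close>)
            have vz: "\<forall>j'\<ge>n. v j' = 0" unfolding v_def Qeval by simp
            have dj1: "1 \<le> d j" using kd by simp
            have kmod: "k mod b = k" using kb by simp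
            have vq: "v q = 1" unfolding v_def Qeval
              using True qn kmod w_init[rule_format, of j j 0] dj1 jl kd
              by (simp add: j_def[symmetric] k_def[symmetric])
            have rkq: "rk q = Suc k" unfolding rk_def using nP True k_def by simp
            have oth: "\<forall>q'<n. q' \<noteq> q \<and> v q' \<noteq> 0 \<longrightarrow> E2 q' \<in> spanZ vs"
            proof (intro allI impI)
              fix q' assume q'n: "q' < n" and q'a: "q' \<noteq> q \<and> v q' \<noteq> 0"
              have bq': "base \<le> q'" using q'a q'n unfolding v_def Qeval by (auto split: if_splits)
              define j' where "j' = (q' - base) div b"
              define k' where "k' = (q' - base) mod b"
              have qjk': "q' = base + j' * b + k'" unfolding j'_def k'_def using bq' by simp
              have jl': "j' < l" unfolding j'_def using q'n nsplit bq' pos(1)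
                by (simp add: less_mult_imp_div_less)
              have kb': "k' < b" unfolding k'_def using pos(1) by simp
              have "rk q' < rk q"
              proof (cases "q' \<in> P")
                case True then have "rk q' = 0" unfolding rk_def by simp
                then show ?thesis using rkq by simp
              next
                case False
                have kd': "k' < d j'"
                proof (rule ccontr)
                  assume "\<not> k' < d j'"
                  then have "q' \<in> P" using qjk' jl' kb' Pmem by simp
                  then show False using False by simp
                qed
                have "k' < k"
                proof (rule ccontr)
                  assume "\<not> k' < k"
                  then have kk: "(k' + b - k) mod b = k' - k" using kb kb'
                    by (simp add: mod_if)
                  have vv: "v q' = w j (j' * b + (k' - k))" unfolding v_def Qeval
                    using bq' q'n kmod kk by (simp add: j'_def[symmetric] k'_def[symmetric])
                  have "w j (j' * b + (k' - k)) = (if j' = j \<and> k' - k = 0 then 1 else 0)"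
                    using w_init jl dj1 jl' kd' by simp
                  then have "j' = j \<and> k' = k" using vv q'a \<open>\<not> k' < k\<close> by (auto split: if_splits)
                  then show False using qjk qjk' q'a by simp
                qed
                moreover have "rk q' = Suc k'" unfolding rk_def using False bq' k'_def by simp
                ultimately show ?thesis using rkq by simp
              qed
              then show "E2 q' \<in> spanZ vs" using IH q'n by blast
            qed
            show ?thesis by (rule spanZ_pivot[OF vS vz vq oth])
          next
            case False
            define v where "v = mat_row G n q"
            have vS: "v \<in> spanZ vs" unfolding v_def
              by (rule spanZ_mem) (use setGR False in \<open>auto simp: vs_def\<close>)
            have vz: "\<forall>j'\<ge>n. v j' = 0" unfolding v_def mat_row_def by simp
            have vq: "v q = 1" unfolding v_def mat_row_def using qn False G_id base_def by simp
            have rkq: "rk q = Suc b" unfolding rk_def using nP False by simp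
            have oth: "\<forall>q'<n. q' \<noteq> q \<and> v q' \<noteq> 0 \<longrightarrow> E2 q' \<in> spanZ vs"
            proof (intro allI impI)
              fix q' assume q'n: "q' < n" and q'a: "q' \<noteq> q \<and> v q' \<noteq> 0"
              have "base \<le> q'"
              proof (rule ccontr)
                assume "\<not> base \<le> q'"
                then have "v q' = 0" unfolding v_def mat_row_def using q'n False G_id base_def q'a by simp
                then show False using q'a by simp
              qed
              then have "rk q' \<le> b" unfolding rk_def using pos(1)
                by (simp add: Suc_leI)
              then have "rk q' < rk q" using rkq by simp
              then show "E2 q' \<in> spanZ vs" using IH q'n by blast
            qed
            show ?thesis by (rule spanZ_pivot[OF vS vz vq oth])
          qed
        qed
      qed
    qed
    then show ?thesis by blast
  qed
  have spanL: "x \<in> constrA C n \<longleftrightarrow> x \<in> spanZ vs" for x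
  proof
    assume xS: "x \<in> spanZ vs"
    then obtain a where xa: "x = (\<lambda>j. \<Sum>k<length vs. a k * (vs ! k) j)" unfolding spanZ_def by blast
    have "(\<lambda>j. x j mod 2) = (\<lambda>j. (\<Sum>k\<in>{k. k < m0 \<and> odd (a k)}. (vs0 ! k) j) mod 2)"
      unfolding xa using parvs by simp
    moreover have "{k. k < m0 \<and> odd (a k)} \<subseteq> {..<m0}" by auto
    ultimately have "(\<lambda>j. x j mod 2) \<in> C" using fb1 by blast
    then show "x \<in> constrA C n" unfolding constrA_def using comb_z xa by simp
  next
    assume xL: "x \<in> constrA C n"
    then have xz: "x \<in> zvec n" and xC: "(\<lambda>i. x i mod 2) \<in> C" unfolding constrA_def by auto
    obtain T where T: "T \<subseteq> {..<m0}" "(\<lambda>i. x i mod 2) = (\<lambda>j. (\<Sum>k\<in>T. (vs0 ! k) j) mod 2)"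
      using fb1 xC by blast
    define u where "u = (\<lambda>j. \<Sum>k<length vs. (if k \<in> T then 1 else 0) * (vs ! k) j)"
    have uS: "u \<in> spanZ vs" unfolding u_def spanZ_def
      by (intro CollectI exI[of _ "\<lambda>k. if k \<in> T then 1 else 0"]) (rule refl)
    have ueq: "u j = (\<Sum>k\<in>T. (vs0 ! k) j)" for j
    proof -
      have "u j = (\<Sum>k<length vs. if k \<in> T then (vs ! k) j else 0)" unfolding u_def
        by (rule sum.cong) auto
      also have "\<dots> = (\<Sum>k\<in>{..<length vs} \<inter> T. (vs ! k) j)" by (simp add: sum.inter_restrict)
      also have "{..<length vs} \<inter> T = T" using T(1) lenvs by auto
      also have "(\<Sum>k\<in>T. (vs ! k) j) = (\<Sum>k\<in>T. (vs0 ! k) j)" using T(1) nth0 by (intro sum.cong) auto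
      finally show ?thesis .
    qed
    define y where "y = (\<lambda>j. x j - u j)"
    have yev: "\<forall>j. even (y j)"
    proof
      fix j
      have "x j mod 2 = u j mod 2" using fun_cong[OF T(2), of j] ueq by simp
      then show "even (y j)" unfolding y_def by (simp add: mod_eq_dvd_iff)
    qed
    have uz: "\<forall>j\<ge>n. u j = 0" using comb_z[of "\<lambda>k. if k \<in> T then 1 else 0"] unfolding u_def zvec_def by simp
    have yz: "\<forall>j\<ge>n. y j = 0" using xz uz unfolding y_def zvec_def by simp
    have yS: "y \<in> spanZ vs" using spanZ_even[OF allE yev yz] .
    have "(\<lambda>j. u j + y j) \<in> spanZ vs" by (rule spanZ_add[OF uS yS])
    moreover have "(\<lambda>j. u j + y j) = x" unfolding y_def by simp
    ultimately show "x \<in> spanZ vs" by simp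
  qed
  define E1 where "E1 p = (\<lambda>j::nat. if j = p then 1 else (0::int))" for p
  define vsh where "vsh = vs0 @ map E1 RP"
  have lenRP: "length RR = length RP" using RRmap by simp
  have lenh: "length vsh = length vs" unfolding vsh_def lenvs m0_def lenRP by simp
  have nthh0: "\<forall>k<m0. vsh ! k = vs0 ! k" unfolding vsh_def m0_def by (simp add: nth_append)
  have nthhR: "\<forall>k<length RP. vsh ! (m0 + k) = E1 (RP ! k)" unfolding vsh_def m0_def by (simp add: nth_append)
  have step: "(\<lambda>j. \<Sum>k<length vs. bb k * (vsh ! k) j) = (\<lambda>_. 0) \<Longrightarrow> \<forall>k<length vs. even (bb k)" for bb
  proof -
    assume Z: "(\<lambda>j. \<Sum>k<length vs. bb k * (vsh ! k) j) = (\<lambda>_. 0)"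
    have Zs: "(\<Sum>k<m0. bb k * (vs0 ! k) j) + (\<Sum>k<length RP. bb (m0 + k) * E1 (RP ! k) j) = 0" for j
    proof -
      have "(\<Sum>k<length vs. bb k * (vsh ! k) j) = 0" using fun_cong[OF Z, of j] by simp
      then show ?thesis unfolding lenvs lenRP sum_split_add using nthh0 nthhR by simp
    qed
    define T where "T = {k. k < m0 \<and> odd (bb k)}"
    define y where "y = (\<lambda>j. (\<Sum>k\<in>T. (vs0 ! k) j) mod 2)"
    have "T \<subseteq> {..<m0}" unfolding T_def by auto
    then have yC: "y \<in> C" using fb1 unfolding y_def by blast
    have ynP: "y j = 0" if "j \<notin> P" for j
    proof -
      have "(\<Sum>k<length RP. bb (m0 + k) * E1 (RP ! k) j) = 0"
        using that setRP by (intro sum.neutral) (auto simp: E1_def nth_mem)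
      then have "(\<Sum>k<m0. bb k * (vs0 ! k) j) = 0" using Zs[of j] by simp
      then have "(\<Sum>k<m0. bb k * (vs0 ! k) j) mod 2 = 0" by simp
      then show ?thesis using par[of bb vs0 j] unfolding y_def T_def m0_def by simp
    qed
    have yb: "y \<in> bvec n" and yk: "\<forall>i<c * b. (\<Sum>j<n. H i j * y j) mod 2 = 0"
      using yC unfolding C_def pc_code_def by auto
    define TT where "TT = {j \<in> P. y j \<noteq> 0}"
    have TTe: "TT = {}"
    proof (rule ccontr)
      assume ne: "TT \<noteq> {}"
      have "TT \<subseteq> P" unfolding TT_def by auto
      have PI: "\<forall>T\<subseteq>P. T \<noteq> {} \<longrightarrow> (\<exists>i<c * b. (\<Sum>j\<in>T. H i j) mod 2 \<noteq> 0)"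
        using P_indep unfolding f2_indep_cols_def P_def by simp
      obtain i where i: "i < c * b" "(\<Sum>j\<in>TT. H i j) mod 2 \<noteq> 0"
        using PI[rule_format, OF \<open>TT \<subseteq> P\<close> ne] by blast
      have "(\<Sum>j<n. H i j * y j) = (\<Sum>j<n. if j \<in> TT then H i j else 0)"
      proof (rule sum.cong)
        fix j assume "j \<in> {..<n}"
        then have "y j \<in> {0, 1}" using yb unfolding bvec_def by auto
        then show "H i j * y j = (if j \<in> TT then H i j else 0)"
          using ynP unfolding TT_def by auto
      qed simp
      also have "\<dots> = (\<Sum>j\<in>{..<n} \<inter> TT. H i j)" by (simp add: sum.inter_restrict)
      also have "{..<n} \<inter> TT = TT" using P_lt unfolding TT_def by auto
      finally show False using yk[rule_format, OF i(1)] i(2) by simp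
    qed
    have y0: "y = (\<lambda>_. 0)"
    proof
      fix j show "y j = 0"
      proof (cases "j \<in> P")
        case True then show ?thesis using TTe unfolding TT_def by auto
      qed (rule ynP)
    qed
    have Te: "T = {}"
    proof (rule ccontr)
      assume "T \<noteq> {}"
      moreover have "T \<subseteq> {..<m0}" unfolding T_def by auto
      ultimately have "y \<noteq> (\<lambda>_. 0)" using fb2 unfolding y_def by blast
      then show False using y0 by simp
    qed
    have ev0: "\<forall>k<m0. even (bb k)" using Te unfolding T_def by auto
    have evR: "even (bb (m0 + k0))" if k0: "k0 < length RP" for k0
    proof -
      define p where "p = RP ! k0"
      have "(\<Sum>k<length RP. bb (m0 + k) * E1 (RP ! k) p) = (\<Sum>k<length RP. if k = k0 then bb (m0 + k) else 0)"
      proof (rule sum.cong)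
        fix k assume "k \<in> {..<length RP}"
        then show "bb (m0 + k) * E1 (RP ! k) p = (if k = k0 then bb (m0 + k) else 0)"
          using distRP k0 unfolding p_def E1_def by (auto simp: nth_eq_iff_index_eq)
      qed simp
      also have "\<dots> = bb (m0 + k0)" using k0 by simp
      finally have "(\<Sum>k<m0. bb k * (vs0 ! k) p) + bb (m0 + k0) = 0" using Zs[of p] by simp
      moreover have "even (\<Sum>k<m0. bb k * (vs0 ! k) p)" using ev0 by (intro dvd_sum) auto
      ultimately show ?thesis
        by (metis dvd_add_right_iff dvd_0_right)
    qed
    show "\<forall>k<length vs. even (bb k)"
    proof (intro allI impI)
      fix k assume "k < length vs"
      show "even (bb k)"
      proof (cases "k < m0")
        case True then show ?thesis using ev0 by simp
      next
        case False
        then have "k = m0 + (k - m0)" "k - m0 < length RP" using \<open>k < length vs\<close> lenvs lenRP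
          by auto
        then obtain k0 where "k = m0 + k0" "k0 < length RP" by blast
        then show ?thesis using evR by simp
      qed
    qed
  qed
  have descent: "\<forall>bb. (\<lambda>j. \<Sum>k<length vs. bb k * (vsh ! k) j) = (\<lambda>_. 0) \<longrightarrow> (\<forall>k<length vs. 2 ^ N dvd bb k)" for N
  proof (induction N)
    case 0 then show ?case by simp
  next
    case (Suc N)
    show ?case
    proof (intro allI impI)
      fix bb k assume Z: "(\<lambda>j. \<Sum>k<length vs. bb k * (vsh ! k) j) = (\<lambda>_. 0)" and k: "k < length vs"
      have ev: "\<forall>k<length vs. even (bb k)" using step[OF Z] .
      have Z2: "(\<lambda>j. \<Sum>k<length vs. (bb k div 2) * (vsh ! k) j) = (\<lambda>_. 0)"
      proof
        fix j
        have "2 * (\<Sum>k<length vs. (bb k div 2) * (vsh ! k) j) = (\<Sum>k<length vs. bb k * (vsh ! k) j)"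
          unfolding sum_distrib_left using ev by (intro sum.cong) auto
        also have "\<dots> = 0" using fun_cong[OF Z, of j] by simp
        finally show "(\<Sum>k<length vs. (bb k div 2) * (vsh ! k) j) = 0" by simp
      qed
      have "2 ^ N dvd bb k div 2" using Suc.IH[rule_format, OF Z2 k] .
      then show "2 ^ Suc N dvd bb k" using ev k by (auto elim!: evenE)
    qed
  qed
  have indep: "\<forall>a. (\<lambda>j. \<Sum>k<length vs. a k * (vs ! k) j) = (\<lambda>_. 0) \<longrightarrow> (\<forall>k<length vs. a k = 0)"
  proof (intro allI impI)
    fix a k assume Z: "(\<lambda>j. \<Sum>k<length vs. a k * (vs ! k) j) = (\<lambda>_. 0)" and k: "k < length vs"
    define bb where "bb k = (if k < m0 then a k else 2 * a k)" for k
    have same: "(\<lambda>j. \<Sum>k<length vs. bb k * (vsh ! k) j) = (\<lambda>j. \<Sum>k<length vs. a k * (vs ! k) j)"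
    proof
      fix j
      show "(\<Sum>k<length vs. bb k * (vsh ! k) j) = (\<Sum>k<length vs. a k * (vs ! k) j)"
        unfolding lenvs sum_split_add
      proof (intro arg_cong2[where f="(+)"] sum.cong refl)
        fix k assume "k \<in> {..<m0}" then show "bb k * (vsh ! k) j = a k * (vs ! k) j"
          using nthh0 nth0 unfolding bb_def by simp
      next
        fix k assume "k \<in> {..<length RR}"
        then show "bb (m0 + k) * (vsh ! (m0 + k)) j = a (m0 + k) * (vs ! (m0 + k)) j"
          using nthhR nthR RRmap lenRP unfolding bb_def by (simp add: E1_def E2_def)
      qed
    qed
    have Zb: "(\<lambda>j. \<Sum>k<length vs. bb k * (vsh ! k) j) = (\<lambda>_. 0)" using same Z by simp
    define N where "N = nat \<bar>bb k\<bar>"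
    have dv: "2 ^ N dvd bb k" using descent Zb k by blast
    have bb0: "bb k = 0"
    proof (rule ccontr)
      assume ne: "bb k \<noteq> 0"
      have "\<bar>2 ^ N\<bar> \<le> \<bar>bb k\<bar>" using dvd_imp_le_int[OF ne dv] .
      moreover have "int N < 2 ^ N"
      proof -
        have "N < 2 ^ N" by (rule less_exp)
        then have "int N < int (2 ^ N)" by linarith
        then show ?thesis by simp
      qed
      ultimately show False unfolding N_def by simp
    qed
    then show "a k = 0" unfolding bb_def by (simp split: if_splits)
  qed
  have zb: "z_basis vs (constrA C n)" unfolding z_basis_def
  proof (intro conjI allI)
    fix x show "x \<in> constrA C n \<longleftrightarrow> (\<exists>a. x = (\<lambda>j. \<Sum>k<length vs. a k * (vs ! k) j))"
      using spanL[of x] unfolding spanZ_def by simp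
  next
    fix a show "(\<lambda>j. \<Sum>k<length vs. a k * (vs ! k) j) = (\<lambda>_. 0) \<longrightarrow> (\<forall>k<length vs. a k = 0)"
      using indep by blast
  qed
  show ?thesis using len zb unfolding vs_def C_def GR_def QR_def RR_def by simp
qed

end
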